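(* Let $p$ be a prime, $0<\alpha\le1$, and let $S\subseteq\mathbb{Z}_p$ have the property that all pairwise sums of different elements of $S$ are distinct (i.e., if $s_1,s_2,s_3,s_4\in S$ with $s_1\neq s_2$, $s_3\neq s_4$ and $s_1+s_2=s_3+s_4$ in $\mathbb{Z}_p$, then $\{s_1,s_2\}=\{s_3,s_4\}$). Then $$\mathcal{C}^{\mathrm{bsgs1}}_\alpha(S)>(\alpha|S|/\sqrt2)^{2/3}.$$
   Context: The BSGS-1 $\alpha$-complexity $\mathcal{C}^{\mathrm{bsgs1}}_\alpha(S)$ of $S\subseteq\mathbb{Z}_p$ is the smallest integer $n$ such that there exist $X,Y\subseteq\mathbb{Z}_p$ with $|X|=|Y|=n$ and $|S\cap(X-Y)|\geq\alpha|S|$, where $X-Y=\{x-y\mid x\in X,y\in Y\}$ (computed in $\mathbb{Z}_p$). *)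

theory Defs
  imports "HOL-Analysis.Analysis"
begin

text \<open>Z_p is modelled by the residues {0..<p} :: int set; arithmetic is taken mod p.\<close>

definition diffset_mod :: "int \<Rightarrow> int set \<Rightarrow> int set \<Rightarrow> int set" where
  "diffset_mod p X Y = {(x - y) mod p | x y. x \<in> X \<and> y \<in> Y}"

definition bsgs1_complexity :: "int \<Rightarrow> real \<Rightarrow> int set \<Rightarrow> nat" where
  "bsgs1_complexity p \<alpha> S = (LEAST n. \<exists>X Y. X \<subseteq> {0..<p} \<and> Y \<subseteq> {0..<p} \<and>
      card X = n \<and> card Y = n \<and>
      real (card (S \<inter> diffset_mod p X Y)) \<ge> \<alpha> * real (card S))"

definition distinct_pair_sums_mod :: "int \<Rightarrow> int set \<Rightarrow> bool" where
  "distinct_pair_sums_mod p S \<longleftrightarrow> (\<forall>s1\<in>S. \<forall>s2\<in>S. \<forall>s3\<in>S. \<forall>s4\<in>S.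
      s1 \<noteq> s2 \<longrightarrow> s3 \<noteq> s4 \<longrightarrow> (s1 + s2) mod p = (s3 + s4) mod p \<longrightarrow>
      {s1, s2} = {s3, s4})"

end

theory Submission imports Defs begin

lemma kst:
  fixes P :: "('a \<times> 'b) set"
  assumes fX: "finite X" and fY: "finite Y" and PXY: "P \<subseteq> X \<times> Y"
    and cX: "card X = n" and cY: "card Y = n"
    and noC4: "\<And>x1 x2 y1 y2. (x1,y1)\<in>P \<Longrightarrow> (x1,y2)\<in>P \<Longrightarrow> (x2,y1)\<in>P \<Longrightarrow> (x2,y2)\<in>P
        \<Longrightarrow> y1 \<noteq> y2 \<Longrightarrow> x1 = x2"
  shows "real (card P) ^ 2 \<le> real n * (real n * real n - real n + real (card P))"
proof -
  define N where "N x = {y. (x,y) \<in> P}" for x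
  have NY: "N x \<subseteq> Y" for x using PXY by (auto simp: N_def)
  have fN: "finite (N x)" for x using NY fY finite_subset by blast
  have fP: "finite P" using PXY fX fY finite_subset by blast
  have Psig: "P = Sigma X N" using PXY by (auto simp: N_def)
  have e: "card P = (\<Sum>x\<in>X. card (N x))"
    unfolding Psig by (simp add: card_SigmaI fX fN)
  define Q where "Q = Sigma X (\<lambda>x. N x \<times> N x)"
  have fQ: "finite Q" unfolding Q_def using fX fN by auto
  have cQ: "card Q = (\<Sum>x\<in>X. card (N x) ^ 2)"
    unfolding Q_def by (simp add: card_SigmaI fX fN card_cartesian_product power2_eq_square)
  define D where "D = {q \<in> Q. fst (snd q) = snd (snd q)}"
  have cD: "card D = card P"
  proof -
    have "D = (\<lambda>(x,y). (x,(y,y))) ` P" unfolding D_def Q_def using PXY by (auto simp: N_def image_iff) force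
    moreover have "inj_on (\<lambda>(x,y). (x,(y,y))) P" by (auto simp: inj_on_def)
    ultimately show ?thesis by (simp add: card_image)
  qed
  define Dg where "Dg = (\<lambda>y. (y,y)) ` Y"
  have cDg: "card Dg = n" unfolding Dg_def using cY by (simp add: card_image inj_on_def)
  have "card (Q - D) \<le> card (Y \<times> Y - Dg)"
  proof (rule card_inj_on_le[where f = snd])
    show "inj_on snd (Q - D)"
    proof (rule inj_onI)
      fix a b assume a: "a \<in> Q - D" and b: "b \<in> Q - D" and ab: "snd a = snd b"
      obtain x1 y1 y2 where a': "a = (x1,y1,y2)" by (cases a) auto
      obtain x2 z1 z2 where b': "b = (x2,z1,z2)" by (cases b) auto
      from a b ab show "a = b" unfolding a' b' Q_def D_def N_def
        using noC4[of x1 y1 y2 x2] by auto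
    qed
    show "snd ` (Q - D) \<subseteq> Y \<times> Y - Dg"
    proof
      fix z assume "z \<in> snd ` (Q - D)"
      then obtain x y1 y2 where "z = (y1,y2)" "x \<in> X" "y1 \<in> N x" "y2 \<in> N x" "y1 \<noteq> y2"
        unfolding Q_def D_def by fastforce
      then show "z \<in> Y \<times> Y - Dg" using NY unfolding Dg_def by auto
    qed
    show "finite (Y \<times> Y - Dg)" using fY by auto
  qed
  moreover have "card (Y \<times> Y - Dg) = n * n - n"
    using fY cDg cY by (subst card_Diff_subset) (auto simp: Dg_def card_cartesian_product)
  moreover have "card Q = card (Q - D) + card D"
  proof -
    have "D \<subseteq> Q" unfolding D_def by blast
    then have "card (Q - D) = card Q - card D" "card D \<le> card Q"
      using fQ finite_subset by (auto intro: card_Diff_subset card_mono)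
    then show ?thesis by simp
  qed
  moreover have "n \<le> n * n" by simp
  ultimately have cQle: "real (card Q) \<le> real n * real n - real n + real (card P)"
  proof -
    assume a: "card (Q - D) \<le> card (Y \<times> Y - Dg)" "card (Y \<times> Y - Dg) = n * n - n"
      "card Q = card (Q - D) + card D" "n \<le> n * n"
    have "real (n * n - n) = real n * real n - real n" using a(4) by (simp add: of_nat_diff)
    have "card Q \<le> (n * n - n) + card P" using a cD by linarith
    then have "real (card Q) \<le> real (n * n - n) + real (card P)" by linarith
    then show ?thesis unfolding \<open>real (n * n - n) = real n * real n - real n\<close> .
  qed
  have "real (card P) ^ 2 = (\<Sum>x\<in>X. real (card (N x))) ^ 2" using e by simp
  also have "\<dots> \<le> (\<Sum>x\<in>X. real (card (N x)) ^ 2) * real n"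
    using sum_squared_le_sum_of_squares[of "\<lambda>x. real (card (N x))" X] cX by simp
  also have "(\<Sum>x\<in>X. real (card (N x)) ^ 2) = real (card Q)" using cQ by simp
  finally show ?thesis using cQle
    by (smt (verit) mult.commute mult_left_mono of_nat_0_le_iff)
qed

lemma final_arith:
  fixes n e a :: real
  assumes "0 \<le> n" "0 < a" "a \<le> e" "e ^ 2 \<le> n * (n * n - n + e)" "e \<le> n * n"
    and "\<not> n > (a / sqrt 2) powr (2/3)"
  shows False
proof -
  define c where "c = a / sqrt 2"
  have c0: "c > 0" using assms(2) by (simp add: c_def)
  have "n ^ 3 \<le> (c powr (2/3)) ^ 3" using assms(1,6) by (intro power_mono) (auto simp: c_def)
  also have "(c powr (2/3)) ^ 3 = (c powr (2/3)) powr 3"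
    by (rule powr_numeral[symmetric]) simp
  also have "\<dots> = c powr 2" by (simp add: powr_powr)
  also have "\<dots> = c ^ 2" using c0 by simp
  also have "\<dots> = a ^ 2 / 2" by (simp add: c_def power_divide)
  finally have h1: "2 * n ^ 3 \<le> a ^ 2" by simp
  have "a ^ 2 \<le> e ^ 2" using assms(2,3) by (intro power_mono) auto
  with h1 assms(4) have "2 * n ^ 3 \<le> n * (n * n - n + e)" by linarith
  moreover have "n * e \<le> n * (n * n)" using assms(1,5) by (intro mult_left_mono)
  ultimately have "n * n \<le> 0" by (simp add: algebra_simps power3_eq_cube)
  then have "n = 0" using assms(1) by (metis mult_pos_pos not_less order.order_iff_strict)
  then show False using assms(2,3,5) by simp
qed

theorem theorem6:
  fixes p :: int and \<alpha> :: real and S :: "int set"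
  assumes "prime p" and "0 < \<alpha>" and "\<alpha> \<le> 1"
    and "S \<subseteq> {0..<p}" and "S \<noteq> {}"
    and "distinct_pair_sums_mod p S"
  shows "real (bsgs1_complexity p \<alpha> S) > (\<alpha> * real (card S) / sqrt 2) powr (2/3)"
proof -
  have p0: "p > 0" using assms(1) prime_gt_0_int by blast
  have fS: "finite S" using assms(4) finite_subset by blast
  have cS: "card S > 0" using fS assms(5) by (simp add: card_gt_0_iff)
  define Q where "Q n = (\<exists>X Y. X \<subseteq> {0..<p} \<and> Y \<subseteq> {0..<p} \<and>
      card X = n \<and> card Y = n \<and>
      real (card (S \<inter> diffset_mod p X Y)) \<ge> \<alpha> * real (card S))" for n
  have "Q (card {0..<p})"
  proof -
    have "S \<subseteq> diffset_mod p {0..<p} {0..<p}"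
    proof
      fix s assume "s \<in> S"
      then have "s = (s - 0) mod p" "s \<in> {0..<p}" "0 \<in> {0..<p}" using assms(4) p0 by auto
      then show "s \<in> diffset_mod p {0..<p} {0..<p}" unfolding diffset_mod_def by blast
    qed
    then have "S \<inter> diffset_mod p {0..<p} {0..<p} = S" by blast
    then show ?thesis unfolding Q_def using assms(3) cS
      by (intro exI[of _ "{0..<p}"]) (auto simp: mult_le_cancel_right1)
  qed
  then have "Q (LEAST n. Q n)" by (rule LeastI)
  moreover have bdef: "bsgs1_complexity p \<alpha> S = (LEAST n. Q n)" unfolding bsgs1_complexity_def Q_def ..
  ultimately obtain X Y where XY: "X \<subseteq> {0..<p}" "Y \<subseteq> {0..<p}"
    "card X = bsgs1_complexity p \<alpha> S" "card Y = bsgs1_complexity p \<alpha> S"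
    "real (card (S \<inter> diffset_mod p X Y)) \<ge> \<alpha> * real (card S)"
    unfolding Q_def by auto
  define n where "n = bsgs1_complexity p \<alpha> S"
  define T where "T = S \<inter> diffset_mod p X Y"
  have fX: "finite X" using XY(1) finite_subset by blast
  have fY: "finite Y" using XY(2) finite_subset by blast
  have "\<forall>t\<in>T. \<exists>xy. fst xy \<in> X \<and> snd xy \<in> Y \<and> t = (fst xy - snd xy) mod p"
    unfolding T_def diffset_mod_def by force
  then obtain f where f: "\<And>t. t \<in> T \<Longrightarrow> fst (f t) \<in> X \<and> snd (f t) \<in> Y \<and> t = (fst (f t) - snd (f t)) mod p"
    by metis
  define P where "P = f ` T"
  have injf: "inj_on f T"
    by (rule inj_onI) (metis f)
  have cP: "card P = card T" unfolding P_def using injf by (simp add: card_image)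
  have PXY: "P \<subseteq> X \<times> Y"
  proof
    fix z assume "z \<in> P"
    then obtain t where t: "t \<in> T" "z = f t" by (auto simp: P_def)
    then show "z \<in> X \<times> Y" using f[OF t(1)] by (simp add: mem_Times_iff)
  qed
  have Pmem: "(x - y) mod p \<in> T \<and> f ((x - y) mod p) = (x, y)" if "(x, y) \<in> P" for x y
  proof -
    have "(x, y) \<in> f ` T" using that unfolding P_def .
    then obtain t where t: "t \<in> T" "f t = (x, y)" by (rule imageE) simp
    then have "t = (x - y) mod p" using f[OF t(1)] by simp
    then show ?thesis using t by simp
  qed
  have TS: "T \<subseteq> S" unfolding T_def by blast
  have noC4: "x1 = x2" if h: "(x1,y1)\<in>P" "(x1,y2)\<in>P" "(x2,y1)\<in>P" "(x2,y2)\<in>P" "y1 \<noteq> y2"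
    for x1 x2 y1 y2
  proof (rule ccontr)
    assume nx: "x1 \<noteq> x2"
    define t11 where "t11 = (x1 - y1) mod p"
    define t12 where "t12 = (x1 - y2) mod p"
    define t21 where "t21 = (x2 - y1) mod p"
    define t22 where "t22 = (x2 - y2) mod p"
    have m: "t11 \<in> S" "t12 \<in> S" "t21 \<in> S" "t22 \<in> S"
      unfolding t11_def t12_def t21_def t22_def
      using conjunct1[OF Pmem[OF h(1)]] conjunct1[OF Pmem[OF h(2)]]
        conjunct1[OF Pmem[OF h(3)]] conjunct1[OF Pmem[OF h(4)]] TS by blast+
    have ff: "f t11 = (x1,y1)" "f t12 = (x1,y2)" "f t21 = (x2,y1)" "f t22 = (x2,y2)"
      unfolding t11_def t12_def t21_def t22_def
      using conjunct2[OF Pmem[OF h(1)]] conjunct2[OF Pmem[OF h(2)]]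
        conjunct2[OF Pmem[OF h(3)]] conjunct2[OF Pmem[OF h(4)]] by blast+
    have d1: "t11 \<noteq> t22" using ff nx by (metis prod.inject)
    have d2: "t12 \<noteq> t21" using ff nx by (metis prod.inject)
    have "(t11 + t22) mod p = ((x1 - y1) + (x2 - y2)) mod p"
      unfolding t11_def t22_def by (rule mod_add_eq)
    also have "(x1 - y1) + (x2 - y2) = (x1 - y2) + (x2 - y1)" by simp
    also have "((x1 - y2) + (x2 - y1)) mod p = (t12 + t21) mod p"
      unfolding t12_def t21_def by (rule mod_add_eq[symmetric])
    finally have eq: "(t11 + t22) mod p = (t12 + t21) mod p" .
    have "{t11, t22} = {t12, t21}"
      by (rule assms(6)[unfolded distinct_pair_sums_mod_def, rule_format, OF m(1) m(4) m(2) m(3) d1 d2 eq])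
    then have "t11 = t12 \<or> t11 = t21" by (auto simp: doubleton_eq_iff)
    then show False using ff nx h(5) by auto
  qed
  have K: "real (card P) ^ 2 \<le> real n * (real n * real n - real n + real (card P))"
    by (rule kst[OF fX fY PXY XY(3)[folded n_def] XY(4)[folded n_def] noC4]) 
  have "card P \<le> card (X \<times> Y)" using PXY fX fY by (intro card_mono) auto
  then have "card P \<le> n * n" using XY(3,4) by (simp add: card_cartesian_product n_def)
  then have E: "real (card P) \<le> real n * real n" by (metis of_nat_le_iff of_nat_mult)
  show ?thesis
  proof (rule ccontr)
    assume neg: "\<not> ?thesis"
    have a1: "0 < \<alpha> * real (card S)" using assms(2) cS by simp
    have a2: "\<alpha> * real (card S) \<le> real (card P)" using cP XY(5) unfolding T_def by simp
    have a3: "\<not> real n > (\<alpha> * real (card S) / sqrt 2) powr (2/3)"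
      using neg unfolding n_def .
    show False by (rule final_arith[OF _ a1 a2 K E a3]) simp
  qed
qed

end
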